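(* There are universal constants $c_0>0$ and $K_3>0$ such that for all $\alpha_m>0$, $\theta\in(0,1)$ and $h,\alpha_s,\eta>0$ satisfying \[ l_1:=\frac{h}{\eta^{1/3}\alpha_s^{1/3}}<c_0(1-\theta)^{2/3}\theta^{2/3}, \] one has \[ E^{1D}_{h,\alpha_s,\eta,\theta}\le K_3\frac{\theta^{4/3}}{(1-\theta)^{2/3}}\alpha_s^{2/3}\eta^{5/3}h . \] This bound is attained by a periodic pattern of bonded intervals (of length $\theta l$, with $u=0$ and $w$ affine of slope $\eta$) alternating with blisters (of length $(1-\theta)l$, on which $w_x+\frac12u_x^2-\eta=0$), with period $l\sim l_1/((1-\theta)^{2/3}\theta^{2/3})$.
   Context: Let $\mathbb T^1=\mathbb R/\mathbb Z$. Fix parameters $\alpha_m>0$, $h>0$, $\alpha_s>0$, $\eta>0$ and $\theta\in(0,1)$. The admissible class $\mathcal A^{1D}$ consists of triples $(w,u,\Omega)$ with $w\in H^1(\mathbb T^1;\mathbb R)$, $u\in H^2(\mathbb T^1;[0,\infty))$, $\Omega\subset\mathbb T^1$ closed with Lebesgue measure $|\Omega|=\theta$, and $u=0$ on $\Omega$. The energy is \[ E^{1D}[w,u,\Omega]=\alpha_m h\int_0^1\Big|w_x+\tfrac12 u_x^2-\eta\Big|^2dx+h^3\int_0^1|u_{xx}|^2dx+\alpha_s\Big(\int_\Omega|w_x|^2dx\Big)^{1/2}\Big(\int_\Omega|w|^2dx\Big)^{1/2}, \] and $E^{1D}_{h,\alpha_s,\eta,\theta}:=\inf_{(w,u,\Omega)\in\mathcal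 A^{1D}}E^{1D}[w,u,\Omega]$. *)

theory Defs
  imports "HOL-Analysis.Analysis"
begin

text \<open>The torus T^1 = R/Z is modelled by 1-periodic functions / sets on the real line.\<close>

definition periodic1 :: "(real \<Rightarrow> real) \<Rightarrow> bool" where
  "periodic1 f \<longleftrightarrow> (\<forall>x. f (x + 1) = f x)"

definition periodic_set1 :: "real set \<Rightarrow> bool" where
  "periodic_set1 S \<longleftrightarrow> (\<forall>x. x \<in> S \<longleftrightarrow> x + 1 \<in> S)"

text \<open>f is in H^1(T^1) with weak derivative g: f is 1-periodic and absolutely continuous,
  f b - f a = integral of g over [a,b], and g is square integrable over a period.\<close>
definition H1_per_deriv :: "(real \<Rightarrow> real) \<Rightarrow> (real \<Rightarrow> real) \<Rightarrow> bool" where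
  "H1_per_deriv f g \<longleftrightarrow>
     periodic1 f \<and> g \<in> borel_measurable lborel \<and>
     (\<forall>a b. a \<le> b \<longrightarrow> set_integrable lborel {a..b} g \<and>
                         f b - f a = (LINT x:{a..b}|lborel. g x)) \<and>
     set_integrable lborel {0..1} (\<lambda>x. (g x)\<^sup>2)"

definition admissible1D ::
  "real \<Rightarrow> (real \<Rightarrow> real) \<Rightarrow> (real \<Rightarrow> real) \<Rightarrow> (real \<Rightarrow> real) \<Rightarrow> (real \<Rightarrow> real)
     \<Rightarrow> (real \<Rightarrow> real) \<Rightarrow> real set \<Rightarrow> bool" where
  "admissible1D \<theta> w w1 u u1 u2 \<Omega> \<longleftrightarrow>
     H1_per_deriv w w1 \<and> H1_per_deriv u u1 \<and> H1_per_deriv u1 u2 \<and>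
     (\<forall>x. 0 \<le> u x) \<and>
     closed \<Omega> \<and> periodic_set1 \<Omega> \<and>
     measure lborel (\<Omega> \<inter> {0..<1}) = \<theta> \<and>
     (\<forall>x\<in>\<Omega>. u x = 0)"

definition energy1D ::
  "real \<Rightarrow> real \<Rightarrow> real \<Rightarrow> real \<Rightarrow> (real \<Rightarrow> real) \<Rightarrow> (real \<Rightarrow> real) \<Rightarrow> (real \<Rightarrow> real)
     \<Rightarrow> (real \<Rightarrow> real) \<Rightarrow> real set \<Rightarrow> real" where
  "energy1D \<alpha>m h \<alpha>s \<eta> w w1 u1 u2 \<Omega> =
     \<alpha>m * h * (LINT x:{0..1}|lborel. (w1 x + (u1 x)\<^sup>2 / 2 - \<eta>)\<^sup>2)
     + h ^ 3 * (LINT x:{0..1}|lborel. (u2 x)\<^sup>2)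
     + \<alpha>s * sqrt (LINT x:(\<Omega> \<inter> {0..1})|lborel. (w1 x)\<^sup>2)
           * sqrt (LINT x:(\<Omega> \<inter> {0..1})|lborel. (w x)\<^sup>2)"

definition E1D :: "real \<Rightarrow> real \<Rightarrow> real \<Rightarrow> real \<Rightarrow> real \<Rightarrow> real" where
  "E1D \<alpha>m h \<alpha>s \<eta> \<theta> =
     Inf {energy1D \<alpha>m h \<alpha>s \<eta> w w1 u1 u2 \<Omega> | w w1 u u1 u2 \<Omega>.
            admissible1D \<theta> w w1 u u1 u2 \<Omega>}"

end

theory Submission
  imports Defs
begin


lemma FTC_all:
  fixes F f :: "real \<Rightarrow> real"
  assumes d: "\<And>x. (F has_real_derivative f x) (at x)" and c: "continuous_on UNIV f" and ab: "a \<le> b"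
  shows "(f has_integral (F b - F a)) {a..b}" "integral {a..b} f = F b - F a"
    "set_integrable lborel {a..b} f" "(LINT x:{a..b}|lborel. f x) = F b - F a"
proof -
  show h: "(f has_integral (F b - F a)) {a..b}"
    apply (rule fundamental_theorem_of_calculus[OF ab])
    using d by (auto simp: has_real_derivative_iff_has_vector_derivative[symmetric] intro: has_field_derivative_at_within)
  then show "integral {a..b} f = F b - F a" by blast
  show si: "set_integrable lborel {a..b} f"
    by (rule borel_integrable_atLeastAtMost') (rule continuous_on_subset[OF c], simp)
  show "(LINT x:{a..b}|lborel. f x) = F b - F a"
    using set_borel_integral_eq_integral(2)[OF si] integral_unique[OF h] by simp
qed

definition antider :: "(real \<Rightarrow> real) \<Rightarrow> real \<Rightarrow> real" where
  "antider f x = (if 0 \<le> x then integral {0..x} f else - integral {x..0} f)"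

lemma antider_zero: "antider f 0 = 0" by (simp add: antider_def)

lemma antider_deriv:
  fixes f :: "real \<Rightarrow> real"
  assumes c: "continuous_on UNIV f"
  shows "(antider f has_real_derivative f x) (at x)"
proof -
  define a where "a = min x 0 - 1"
  define b where "b = max x 0 + 1"
  have cab: "continuous_on {a..b} f" by (rule continuous_on_subset[OF c]) simp
  have int: "\<And>c d. f integrable_on {c..d}"
    by (rule integrable_continuous_interval, rule continuous_on_subset[OF c], simp)
  have xin: "x \<in> {a<..<b}" using a_def b_def by auto
  have eq: "antider f t = integral {a..t} f - integral {a..0} f" if "t \<in> {a..b}" for t
  proof (cases "0 \<le> t")
    case True
    have "integral {a..0} f + integral {0..t} f = integral {a..t} f"
      using Henstock_Kurzweil_Integration.integral_combine[where a=a and c=0 and b=t and f=f] int True that a_def by auto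
    then show ?thesis using True by (simp add: antider_def)
  next
    case False
    have "integral {a..t} f + integral {t..0} f = integral {a..0} f"
      using Henstock_Kurzweil_Integration.integral_combine[where a=a and c=t and b=0 and f=f] int False that a_def by auto
    then show ?thesis using False by (simp add: antider_def)
  qed
  have d0: "((\<lambda>t. integral {a..t} f) has_real_derivative f x) (at x within {a..b})"
    using integral_has_real_derivative[OF cab, of x] xin by auto
  have d1: "((\<lambda>t. integral {a..t} f - integral {a..0} f) has_real_derivative f x) (at x within {a..b})"
    using DERIV_diff[OF d0 DERIV_const[of "integral {a..0} f"]] by simp
  have d2: "((\<lambda>t. integral {a..t} f - integral {a..0} f) has_real_derivative f x) (at x)"
    using d1 xin at_within_interior[of x "{a..b}"] by simp
  show ?thesis
    apply (rule has_field_derivative_transform_within_open[OF d2, of "{a<..<b}"])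
    using xin eq by auto
qed

lemma per_antider:
  fixes G F :: "real \<Rightarrow> real"
  assumes d: "\<And>x. (G has_real_derivative F x) (at x)" and p: "\<And>s. F (s+1) = F s"
  shows "G (real n) - G 0 = real n * (G 1 - G 0)"
proof -
  have H: "G (t+1) - G t = G 1 - G 0" for t
  proof -
    have "\<forall>x. ((\<lambda>t. G (t+1) - G t) has_real_derivative 0) (at x)"
    proof
      fix x
      have i: "((\<lambda>t. t + 1) has_real_derivative 1) (at x)" by (auto intro!: derivative_eq_intros)
      have "((\<lambda>t. G (t+1) - G t) has_real_derivative (F (x+1) * 1 - F x)) (at x)"
        by (rule DERIV_diff[OF DERIV_chain'[OF i d] d])
      then show "((\<lambda>t. G (t+1) - G t) has_real_derivative 0) (at x)" using p by simp
    qed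
    from DERIV_isconst_all[OF this, of t 0] show ?thesis by simp
  qed
  show ?thesis
  proof (induction n)
    case 0 then show ?case by simp
  next
    case (Suc n)
    have "G (real (Suc n)) - G 0 = (G (real n + 1) - G (real n)) + (G (real n) - G 0)" by (simp add: add.commute)
    also have "... = (G 1 - G 0) + real n * (G 1 - G 0)" using H Suc by simp
    finally show ?case by (simp add: algebra_simps)
  qed
qed

lemma maxpow_deriv:
  assumes "n \<ge> 1"
  shows "((\<lambda>y::real. (max 0 y)^(Suc n)) has_real_derivative real (Suc n) * (max 0 y)^n) (at y)"
proof (cases "y > 0")
  case True
  have ev: "eventually (\<lambda>t. (max 0 t)^(Suc n) = t^(Suc n)) (nhds y)"
    using eventually_nhds_in_open[of "{0<..}" y] True
    by (auto elim!: eventually_mono)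
  have "((\<lambda>t. t^(Suc n)) has_real_derivative real (Suc n) * y^n) (at y)"
    using DERIV_pow[of "Suc n" y] by simp
  then show ?thesis
    using DERIV_cong_ev[OF refl ev refl] True by simp
next
  case False
  show ?thesis
  proof (cases "y < 0")
    case True
    have ev: "eventually (\<lambda>t. (max 0 t)^(Suc n) = 0) (nhds y)"
      using eventually_nhds_in_open[of "{..<0}" y] True
      by (auto elim!: eventually_mono)
    have "((\<lambda>t. 0::real) has_real_derivative 0) (at y)" by simp
    then show ?thesis
      using DERIV_cong_ev[OF refl ev refl] True assms by (simp add: power_0_left)
  next
    case False
    then have y0: "y = 0" using \<open>\<not> y > 0\<close> by simp
    have lim: "((\<lambda>t::real. \<bar>t\<bar>^n) \<longlongrightarrow> 0) (at 0)"
    proof -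
      have i: "isCont (\<lambda>t::real. \<bar>t\<bar>^n) 0" by (auto intro!: continuous_intros)
      have z: "\<bar>0::real\<bar> ^ n = 0" using assms by (simp add: power_0_left)
      show ?thesis using i unfolding isCont_def by (simp only: z)
    qed
    have bnd: "norm ((max 0 t)^(Suc n) / t) \<le> norm (\<bar>t\<bar>^n) * 1" for t :: real
    proof (cases "t = 0")
      case True then show ?thesis by simp
    next
      case False
      have "\<bar>max 0 t\<bar>^(Suc n) \<le> \<bar>t\<bar>^(Suc n)"
        by (rule power_mono) auto
      then have "\<bar>max 0 t\<bar>^(Suc n) / \<bar>t\<bar> \<le> \<bar>t\<bar>^(Suc n) / \<bar>t\<bar>"
        by (rule divide_right_mono) simp
      also have "\<bar>t\<bar>^(Suc n) / \<bar>t\<bar> = \<bar>t\<bar>^n" using False by simp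
      finally show ?thesis by (simp add: abs_divide power_abs)
    qed
    have "((\<lambda>t. ((max 0 t)^(Suc n) - (max 0 0)^(Suc n)) / (t - 0)) \<longlongrightarrow> (0::real)) (at 0)"
      using tendsto_0_le[OF lim, of "\<lambda>t. (max 0 t)^(Suc n) / t" 1] bnd by simp
    moreover obtain m where "n = Suc m" using assms by (cases n) auto
    ultimately show ?thesis using y0
      by (simp add: has_field_derivative_iff)
  qed
qed



definition Yp :: "real \<Rightarrow> real \<Rightarrow> real" where "Yp c s = max 0 (cos(2 * pi * s) - c)"
definition P :: "real \<Rightarrow> real \<Rightarrow> real" where "P c s = Yp c s ^ 3"
definition P1 :: "real \<Rightarrow> real \<Rightarrow> real" where "P1 c s = 3 * Yp c s ^ 2 * (- (2 * pi * sin(2 * pi * s)))"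
definition P2 :: "real \<Rightarrow> real \<Rightarrow> real" where
  "P2 c s = 6 * Yp c s * (2 * pi * sin(2 * pi * s))^2 - 12 * pi^2 * Yp c s ^2 * cos(2 * pi * s)"

lemma mp3: "((\<lambda>y::real. (max 0 y)^3) has_real_derivative 3 * (max 0 y)^2) (at y)"
  using maxpow_deriv[of 2 y] by (simp add: numeral_3_eq_3)

lemma mp2: "((\<lambda>y::real. (max 0 y)^2) has_real_derivative 2 * (max 0 y)) (at y)"
  using maxpow_deriv[of 1 y] by (simp add: numeral_2_eq_2)

lemma Y_deriv: "((\<lambda>s. cos(2 * pi * s) - c) has_real_derivative -(2 * pi * sin(2 * pi * s))) (at s)"
  by (auto intro!: derivative_eq_intros)

lemma P_deriv: "(P c has_real_derivative P1 c s) (at s)"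
proof -
  have e: "P c = (\<lambda>s. (max 0 (cos(2 * pi * s) - c))^3)" by (rule ext) (simp add: P_def Yp_def)
  have "((\<lambda>s. (max 0 (cos(2 * pi * s) - c))^3) has_real_derivative
     (3 * (max 0 (cos(2 * pi * s) - c))^2) * (-(2 * pi * sin(2 * pi * s)))) (at s)"
    by (rule DERIV_chain'[OF Y_deriv mp3])
  then show ?thesis unfolding e by (simp add: P1_def Yp_def)
qed

lemma P1_deriv: "(P1 c has_real_derivative P2 c s) (at s)"
proof -
  have e: "P1 c = (\<lambda>s. 3 * (max 0 (cos(2 * pi * s) - c))^2 * (-(2 * pi * sin(2 * pi * s))))"
    by (rule ext) (simp add: P1_def Yp_def)
  have a: "((\<lambda>s. (max 0 (cos(2 * pi * s) - c))^2) has_real_derivative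
      2 * max 0 (cos(2 * pi * s) - c) * (-(2 * pi * sin(2 * pi * s)))) (at s)"
    by (rule DERIV_chain'[OF Y_deriv mp2])
  have b: "((\<lambda>s. -(2 * pi * sin(2 * pi * s))) has_real_derivative -(4 * pi^2 * cos(2 * pi * s))) (at s)"
    by (auto intro!: derivative_eq_intros simp: power2_eq_square)
  have "((\<lambda>s. 3 * (max 0 (cos(2 * pi * s) - c))^2 * (-(2 * pi * sin(2 * pi * s)))) has_real_derivative
     (3 * (2 * max 0 (cos(2 * pi * s) - c) * (-(2 * pi * sin(2 * pi * s))))) * (-(2 * pi * sin(2 * pi * s)))
      + (-(4 * pi^2 * cos(2 * pi * s))) * (3 * (max 0 (cos(2 * pi * s) - c))^2)) (at s)"
    by (rule DERIV_mult[OF DERIV_cmult[OF a] b])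
  then show ?thesis unfolding e
    by (rule DERIV_cong) (simp add: P2_def Yp_def power2_eq_square algebra_simps)
qed

lemma P_cont: "continuous_on UNIV (P c)"
  using P_deriv by (meson DERIV_isCont continuous_at_imp_continuous_on)
lemma P1_cont: "continuous_on UNIV (P1 c)"
  using P1_deriv by (meson DERIV_isCont continuous_at_imp_continuous_on)
lemma P2_cont: "continuous_on UNIV (P2 c)"
  unfolding P2_def[abs_def] Yp_def by (intro continuous_intros)

lemma cs_per: "cos(2 * pi * (s+1)) = cos(2 * pi * s)" "sin(2 * pi * (s+1)) = sin(2 * pi * s)"
  by (simp_all add: distrib_left)

lemma P_per: "P c (s+1) = P c s" "P1 c (s+1) = P1 c s" "P2 c (s+1) = P2 c s"
  by (simp_all add: P_def P1_def P2_def Yp_def cs_per)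

lemma P1_odd: "P1 c (-s) = - P1 c s"
  by (simp add: P1_def Yp_def)

lemma P_nonneg: "0 \<le> P c s" by (simp add: P_def Yp_def)

lemma Yp_zero: "cos(2 * pi * s) \<le> c \<Longrightarrow> Yp c s = 0" by (simp add: Yp_def)

lemma P_zero: "cos(2 * pi * s) \<le> c \<Longrightarrow> P c s = 0 \<and> P1 c s = 0 \<and> P2 c s = 0"
  by (simp add: P_def P1_def P2_def Yp_zero)

lemma pi_scale: "0 \<le> a \<Longrightarrow> a \<le> 1 \<Longrightarrow> 0 \<le> pi * a \<and> pi * a \<le> pi"
  using mult_left_le[of a pi] by simp

lemma cos_char:
  assumes d: "0 < d" "d < 1"
  shows "cos(2 * pi * t) \<le> cos(pi * d) \<longleftrightarrow>
     (of_int \<lfloor>t\<rfloor> + d/2 \<le> t \<and> t \<le> of_int \<lfloor>t\<rfloor> + 1 - d/2)"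
proof -
  define k where "k = \<lfloor>t\<rfloor>"
  define r where "r = t - of_int k"
  have fl: "of_int k \<le> t" "t < of_int k + 1" unfolding k_def using floor_correct[of t] by auto
  have r: "0 \<le> r" "r < 1" using fl by (simp_all add: r_def)
  have "2 * pi * t = 2 * pi * r + 2 * pi * of_int k" by (simp add: r_def algebra_simps)
  then have ceq: "cos(2 * pi * t) = cos(2 * pi * r)" by (simp add: cos_add)
  have rhs: "(of_int \<lfloor>t\<rfloor> + d/2 \<le> t \<and> t \<le> of_int \<lfloor>t\<rfloor> + 1 - d/2) \<longleftrightarrow> (d/2 \<le> r \<and> r \<le> 1 - d/2)"
    by (simp add: r_def k_def) linarith
  have pd: "0 \<le> pi * d \<and> pi * d \<le> pi" using pi_scale[of d] d by simp
  show ?thesis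
  proof (cases "r \<le> 1/2")
    case True
    have a: "0 \<le> pi * (2 * r) \<and> pi * (2 * r) \<le> pi" using pi_scale[of "2 * r"] True r by simp
    have "cos(2 * pi * r) \<le> cos(pi * d) \<longleftrightarrow> pi * d \<le> pi * (2 * r)"
      using cos_mono_le_eq[of "pi * (2 * r)" "pi * d"] a pd by (simp add: mult.assoc mult.left_commute)
    also have "\<dots> \<longleftrightarrow> d \<le> 2 * r" by simp
    finally show ?thesis using ceq rhs True d by auto
  next
    case False
    have a: "0 \<le> pi * (2 * (1-r)) \<and> pi * (2 * (1-r)) \<le> pi" using pi_scale[of "2 * (1-r)"] False r by simp
    have c2: "cos(2 * pi * r) = cos(pi * (2 * (1-r)))"
      using cos_2pi_minus[of "2 * pi * r"] by (simp add: algebra_simps)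
    have "cos(2 * pi * r) \<le> cos(pi * d) \<longleftrightarrow> pi * d \<le> pi * (2 * (1-r))"
      using cos_mono_le_eq[of "pi * (2 * (1-r))" "pi * d"] a pd c2 by simp
    also have "\<dots> \<longleftrightarrow> d \<le> 2 * (1-r)" by simp
    finally show ?thesis using ceq rhs False d by auto
  qed
qed

lemma sin_half_bound:
  fixes x :: real
  assumes "0 \<le> x" "x \<le> 8/5"
  shows "x / 2 \<le> sin x"
proof -
  have s: "(\<Sum>m<3. sin_coeff m * x^m) = x"
    by (simp add: sin_coeff_def numeral_3_eq_3)
  have "\<bar>sin x - x\<bar> \<le> inverse (fact 3) * \<bar>x\<bar>^3"
    using Maclaurin_sin_bound[of x 3] s by simp
  then have h: "\<bar>sin x - x\<bar> * 6 \<le> x^3" using assms by (simp add: fact_numeral)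
  have a: "(x - sin x) * 6 \<le> x ^ 3" using h by (smt (verit) abs_ge_minus_self mult_right_mono)
  then have "x - x^3/6 \<le> sin x" by (simp add: field_simps)
  moreover have "x^3/6 \<le> x/2"
  proof -
    have "x * x \<le> (8/5) * (8/5)" using assms by (intro mult_mono) auto
    then have "x^2 \<le> 3" by (simp add: power2_eq_square)
    then have "x * x^2 \<le> x * 3" using assms by (intro mult_left_mono) auto
    then show ?thesis by (simp add: power3_eq_cube power2_eq_square)
  qed
  ultimately show ?thesis by simp
qed



lemma one_minus_cos:
  assumes d: "0 < d" "d < 1"
  shows "d^2 \<le> 1 - cos(pi * d)"
proof -
  define x where "x = pi * d / 2"
  have pd: "pi * d \<le> pi" using pi_scale[of d] d by simp
  have x0: "0 \<le> x" using d by (simp add: x_def)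
  have p: "pi \<le> 16/5" using pi_approx(2) by simp
  have x1: "x \<le> 8/5" using pd p unfolding x_def by linarith
  have s: "x/2 \<le> sin x" by (rule sin_half_bound[OF x0 x1])
  have c: "cos(pi * d) = 1 - 2 * (sin x)^2" using cos_double_sin[of x] by (simp add: x_def)
  have "(x/2)^2 \<le> (sin x)^2" by (rule power_mono[OF s]) (use x0 in simp)
  then have "2 * (x/2)^2 \<le> 1 - cos(pi * d)" using c by simp
  moreover have "2 * (x/2)^2 = pi^2 * d^2 / 8" by (simp add: x_def power2_eq_square)
  moreover have "9 \<le> pi^2"
  proof -
    have "3 * 3 \<le> pi * pi" using pi_gt3 by (intro mult_mono) auto
    then show ?thesis by (simp add: power2_eq_square)
  qed
  moreover have "8 * d^2 \<le> pi^2 * d^2" using \<open>9 \<le> pi^2\<close> by (intro mult_right_mono) auto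
  ultimately show ?thesis by linarith
qed

lemma sin_sq_bound:
  fixes c s :: real
  assumes "c < cos(2 * pi * s)"
  shows "(sin(2 * pi * s))^2 \<le> 2 * (1 - c)"
proof (cases "0 \<le> c")
  case True
  have "c^2 \<le> (cos(2 * pi * s))^2" using True assms by (intro power_mono) auto
  moreover have "(sin(2 * pi * s))^2 = 1 - (cos(2 * pi * s))^2" by (rule sin_squared_eq)
  moreover have e: "(1-c)^2 = 1 - 2 * c + c^2" by (simp add: power2_eq_square algebra_simps)
  moreover have "0 \<le> (1-c)^2" by simp
  ultimately show ?thesis by (smt (verit))
next
  case False
  have "(sin(2 * pi * s))^2 = 1 - (cos(2 * pi * s))^2" by (rule sin_squared_eq)
  moreover have "0 \<le> (cos(2 * pi * s))^2" by simp
  ultimately show ?thesis using False by (smt (verit))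
qed

lemma P2_bound:
  assumes "c < 1"
  shows "\<bar>P2 c s\<bar> \<le> 60 * pi^2 * (1-c)^2"
proof (cases "cos(2 * pi * s) \<le> c")
  case True
  then show ?thesis using P_zero[OF True] by simp
next
  case False
  define y where "y = Yp c s"
  define S where "S = (sin(2 * pi * s))^2"
  have y: "y = cos(2 * pi * s) - c" using False by (simp add: y_def Yp_def)
  have y0: "0 \<le> y" using False y by simp
  have y1: "y \<le> 1 - c" using y cos_le_one[of "2 * pi * s"] by simp
  have S0: "0 \<le> S" by (simp add: S_def)
  have S1: "S \<le> 2 * (1 - c)" using sin_sq_bound[of c s] False by (simp add: S_def)
  have C1: "\<bar>cos(2 * pi * s)\<bar> \<le> 1" by simp
  have P2e: "P2 c s = 24 * pi^2 * (y * S) - 12 * pi^2 * (y^2 * cos(2 * pi * s))"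
    by (simp add: P2_def y_def S_def power_mult_distrib power2_eq_square algebra_simps)
  have "\<bar>P2 c s\<bar> \<le> \<bar>24 * pi^2 * (y * S)\<bar> + \<bar>12 * pi^2 * (y^2 * cos(2 * pi * s))\<bar>"
    unfolding P2e by (rule abs_triangle_ineq4)
  also have "\<dots> = 24 * pi^2 * (y * S) + 12 * pi^2 * (y^2 * \<bar>cos(2 * pi * s)\<bar>)"
    using y0 S0 by (simp add: abs_mult)
  also have "\<dots> \<le> 24 * pi^2 * ((1-c) * (2 * (1-c))) + 12 * pi^2 * ((1-c)^2 * 1)"
  proof -
    have a: "y * S \<le> (1-c) * (2 * (1-c))" using y0 y1 S0 S1 by (intro mult_mono) auto
    have b0: "y^2 \<le> (1-c)^2" using y0 y1 by (intro power_mono) auto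
    have b: "y^2 * \<bar>cos(2 * pi * s)\<bar> \<le> (1-c)^2 * 1" using b0 C1 by (intro mult_mono) auto
    show ?thesis using a b by (intro add_mono mult_left_mono) auto
  qed
  also have "\<dots> = 60 * pi^2 * (1-c)^2" by (simp add: power2_eq_square algebra_simps)
  finally show ?thesis .
qed

lemma P1sq_cont: "continuous_on UNIV (\<lambda>s. P1 c s ^ 2)"
  by (intro continuous_intros P1_cont)
lemma P2sq_cont: "continuous_on UNIV (\<lambda>s. P2 c s ^ 2)"
  by (intro continuous_intros P2_cont)

lemma int_cont: fixes f :: "real \<Rightarrow> real" shows "continuous_on UNIV f \<Longrightarrow> f integrable_on {a..b}"
  by (rule integrable_continuous_interval, rule continuous_on_subset) auto

lemma I_lower:
  assumes d: "0 < d" "d < 1"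
  shows "2 * ((1 - cos(pi * d))^3)^2 / d \<le> integral {0..1} (\<lambda>s. P1 (cos(pi * d)) s ^ 2)"
proof -
  define c where "c = cos(pi * d)"
  define q where "q = (1 - c)^3"
  define L where "L = d / 2"
  define m where "m = q / L"
  have L0: "0 < L" "L \<le> 1" using d by (auto simp: L_def)
  have P0: "P c 0 = q" using cos_le_one[of "pi * d"] by (simp add: P_def Yp_def q_def c_def)
  have PL: "P c L = 0" by (simp add: P_def Yp_def c_def L_def)
  have dF: "((\<lambda>s. 2 * m * P c s + m^2 * s) has_real_derivative 2 * m * P1 c s + m^2) (at s)" for s
    using DERIV_add[OF DERIV_cmult[OF P_deriv[of c s], where c="2 * m"] DERIV_cmult[OF DERIV_ident, where c="m^2"]]
    by simp
  have cF: "continuous_on UNIV (\<lambda>s. 2 * m * P1 c s + m^2)" by (intro continuous_intros P1_cont)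
  have A1: "integral {0..L} (\<lambda>s. 2 * m * P1 c s + m^2) = - 2 * m * q + m^2 * L"
    using FTC_all(2)[OF dF cF, of 0 L] L0 P0 PL by simp
  have eqf: "(\<lambda>s. (P1 c s + m)^2) = (\<lambda>s. P1 c s ^ 2 + (2 * m * P1 c s + m^2))"
    by (rule ext) (simp add: power2_eq_square algebra_simps)
  have A2: "integral {0..L} (\<lambda>s. (P1 c s + m)^2) = integral {0..L} (\<lambda>s. P1 c s ^ 2) + integral {0..L} (\<lambda>s. 2 * m * P1 c s + m^2)"
    unfolding eqf by (rule integral_add) (auto intro!: int_cont P1sq_cont cF)
  have A3: "0 \<le> integral {0..L} (\<lambda>s. (P1 c s + m)^2)"
    by (rule integral_nonneg) (auto intro!: int_cont continuous_intros P1_cont)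
  have A4: "integral {0..L} (\<lambda>s. P1 c s ^ 2) \<le> integral {0..1} (\<lambda>s. P1 c s ^ 2)"
    by (rule integral_subset_le) (use L0 in \<open>auto intro!: int_cont P1sq_cont\<close>)
  have fin: "2 * m * q - m^2 * L = 2 * q^2 / d" using d by (simp add: m_def L_def field_simps power2_eq_square)
  show ?thesis using A1 A2 A3 A4 fin by (simp add: c_def[symmetric] q_def[symmetric])
qed

lemma J_upper:
  assumes d: "0 < d" "d < 1"
  shows "integral {0..1} (\<lambda>s. P2 (cos(pi * d)) s ^ 2) \<le> d * (60 * pi^2 * (1 - cos(pi * d))^2)^2"
proof -
  define c where "c = cos(pi * d)"
  define B where "B = (60 * pi^2 * (1 - c)^2)^2"
  define L where "L = d / 2"
  have L0: "0 < L" "L \<le> 1 - L" using d by (auto simp: L_def)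
  have c1: "c < 1"
  proof -
    have a: "d^2 \<le> 1 - c" using one_minus_cos[OF d] by (simp add: c_def)
    have b: "0 < d^2" using d by simp
    from a b show ?thesis by linarith
  qed
  have bnd: "P2 c s ^ 2 \<le> B" for s
  proof -
    have "\<bar>P2 c s\<bar>^2 \<le> (60 * pi^2 * (1-c)^2)^2" by (rule power_mono[OF P2_bound[OF c1]]) simp
    then show ?thesis by (simp add: B_def)
  qed
  have mid: "P2 c s ^ 2 \<le> 0" if "s \<in> {L..1-L}" for s
  proof -
    have fl: "\<lfloor>s\<rfloor> = 0" using that L0 by (intro floor_unique) auto
    have "cos(2 * pi * s) \<le> c" unfolding c_def
      using cos_char[OF d, of s] fl that by (simp add: L_def)
    then show ?thesis using P_zero by simp
  qed
  have ii: "\<And>a b. (\<lambda>s. P2 c s ^ 2) integrable_on {a..b}" by (rule int_cont[OF P2sq_cont])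
  have ic: "\<And>a b k. (\<lambda>s::real. k::real) integrable_on {a..b}" by (rule int_cont) simp
  have s1: "integral {0..L} (\<lambda>s. P2 c s ^ 2) + integral {L..1} (\<lambda>s. P2 c s ^ 2) = integral {0..1} (\<lambda>s. P2 c s ^ 2)"
    using Henstock_Kurzweil_Integration.integral_combine[where a=0 and c=L and b=1, OF _ _ ii] L0 by simp
  have s2: "integral {L..1-L} (\<lambda>s. P2 c s ^ 2) + integral {1-L..1} (\<lambda>s. P2 c s ^ 2) = integral {L..1} (\<lambda>s. P2 c s ^ 2)"
    using Henstock_Kurzweil_Integration.integral_combine[where a=L and c="1-L" and b=1, OF _ _ ii] L0 by simp
  have b1: "integral {0..L} (\<lambda>s. P2 c s ^ 2) \<le> integral {0..L} (\<lambda>s. B)"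
    by (rule integral_le[OF ii ic]) (rule bnd)
  have b2: "integral {L..1-L} (\<lambda>s. P2 c s ^ 2) \<le> integral {L..1-L} (\<lambda>s. 0)"
    by (rule integral_le[OF ii ic]) (rule mid)
  have b3: "integral {1-L..1} (\<lambda>s. P2 c s ^ 2) \<le> integral {1-L..1} (\<lambda>s. B)"
    by (rule integral_le[OF ii ic]) (rule bnd)
  have b1': "integral {0..L} (\<lambda>s. P2 c s ^ 2) \<le> L * B" using b1 L0 by simp
  have b2': "integral {L..1-L} (\<lambda>s. P2 c s ^ 2) \<le> 0" using b2 by simp
  have b3': "integral {1-L..1} (\<lambda>s. P2 c s ^ 2) \<le> L * B" using b3 L0 by simp
  have "integral {0..1} (\<lambda>s. P2 c s ^ 2) \<le> 2 * (L * B)"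
    using s1 s2 b1' b2' b3' by linarith
  also have "\<dots> = d * B" by (simp add: L_def)
  finally show ?thesis by (simp add: B_def c_def)
qed



lemma per_shift:
  fixes G F :: "real \<Rightarrow> real"
  assumes d: "\<And>x. (G has_real_derivative F x) (at x)" and p: "\<And>s. F (s+1) = F s"
  shows "G (t+1) - G t = G 1 - G 0"
proof -
  have "\<forall>x. ((\<lambda>t. G (t+1) - G t) has_real_derivative 0) (at x)"
  proof
    fix x
    have i: "((\<lambda>t. t + 1) has_real_derivative 1) (at x)" by (auto intro!: derivative_eq_intros)
    have "((\<lambda>t. G (t+1) - G t) has_real_derivative (F (x+1) * 1 - F x)) (at x)"
      by (rule DERIV_diff[OF DERIV_chain'[OF i d] d])
    then show "((\<lambda>t. G (t+1) - G t) has_real_derivative 0) (at x)" using p by simp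
  qed
  from DERIV_isconst_all[OF this, of t 0] show ?thesis by simp
qed

lemma scale_deriv:
  assumes "\<And>y. (f has_real_derivative f' y) (at y)"
  shows "((\<lambda>x. k * f (a * x)) has_real_derivative k * a * f' (a * x)) (at x)"
proof -
  have i: "((\<lambda>x. a * x) has_real_derivative a) (at x)" by (auto intro!: derivative_eq_intros)
  have "((\<lambda>x. f (a * x)) has_real_derivative f' (a * x) * a) (at x)" by (rule DERIV_chain'[OF i assms])
  from DERIV_cmult[OF this, where c=k] show ?thesis by (simp add: ac_simps)
qed

lemma cont_scale:
  fixes f :: "real \<Rightarrow> real"
  assumes "continuous_on UNIV f"
  shows "continuous_on UNIV (\<lambda>x. k * f (a * x))"
proof -
  have "continuous_on UNIV (\<lambda>x. f (a * x))"
    by (rule continuous_on_compose2[OF assms]) (auto intro!: continuous_intros)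
  then show ?thesis by (intro continuous_intros)
qed

lemma P_pern: "P c (s + real n) = P c s" "P1 c (s + real n) = P1 c s"
  "cos(2 * pi * (s + real n)) = cos(2 * pi * s)"
proof (induction n)
  case 0 then show "P c (s + real 0) = P c s" "P1 c (s + real 0) = P1 c s"
    "cos(2 * pi * (s + real 0)) = cos(2 * pi * s)" by simp_all
next
  case (Suc n)
  have e: "s + real (Suc n) = (s + real n) + 1" by simp
  show "P c (s + real (Suc n)) = P c s" "P1 c (s + real (Suc n)) = P1 c s"
    "cos(2 * pi * (s + real (Suc n))) = cos(2 * pi * s)"
    unfolding e using Suc P_per cs_per by simp_all
qed

locale constr =
  fixes th eta :: real and N :: nat
  assumes th0: "0 < th" and th1: "th < 1" and eta0: "0 < eta" and N1: "1 \<le> N"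
begin

definition "cd = 1 - th"
definition "cc = cos(pi * cd)"
definition "Nr = real N"
definition "II = integral {0..1} (\<lambda>s. P1 cc s ^ 2)"
definition "JJ = integral {0..1} (\<lambda>s. P2 cc s ^ 2)"
definition "cA = sqrt (2 * eta / (Nr^2 * II))"
definition cu :: "real \<Rightarrow> real" where "cu x = cA * P cc (Nr * x)"
definition cu1 :: "real \<Rightarrow> real" where "cu1 x = cA * Nr * P1 cc (Nr * x)"
definition cu2 :: "real \<Rightarrow> real" where "cu2 x = cA * Nr^2 * P2 cc (Nr * x)"
definition cw1 :: "real \<Rightarrow> real" where "cw1 x = eta - (cu1 x)^2 / 2"
definition "cw = antider cw1"
definition "cOm = {x. cos(2 * pi * (Nr * x)) \<le> cc}"

lemma d0: "0 < cd" and d1: "cd < 1" using th0 th1 by (auto simp: cd_def)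
lemma dc: "cd^2 \<le> 1 - cc" unfolding cc_def by (rule one_minus_cos[OF d0 d1])
lemma c1: "cc < 1"
proof -
  have "0 < cd^2" using d0 by simp
  then show ?thesis using dc by linarith
qed
lemma Nr1: "1 \<le> Nr" using N1 by (simp add: Nr_def)
lemma Nr0: "0 < Nr" using Nr1 by simp

lemma II_low: "2 * ((1 - cc)^3)^2 / cd \<le> II"
  unfolding II_def cc_def by (rule I_lower[OF d0 d1])
lemma II_pos: "0 < II"
proof -
  have "0 < 1 - cc" using c1 by simp
  then have "0 < 2 * ((1 - cc)^3)^2 / cd" using d0 by simp
  then show ?thesis using II_low by linarith
qed
lemma JJ_up: "JJ \<le> cd * (60 * pi^2 * (1 - cc)^2)^2"
  unfolding JJ_def cc_def by (rule J_upper[OF d0 d1])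
lemma JJ_nonneg: "0 \<le> JJ"
  unfolding JJ_def by (rule integral_nonneg) (auto intro!: int_cont P2sq_cont)

lemma A2: "cA^2 = 2 * eta / (Nr^2 * II)"
  unfolding cA_def using eta0 II_pos Nr0 by simp
lemma A0: "0 \<le> cA" unfolding cA_def using eta0 II_pos Nr0 by simp

lemma du: "(cu has_real_derivative cu1 x) (at x)"
proof -
  have "((\<lambda>x. cA * P cc (Nr * x)) has_real_derivative cA * Nr * P1 cc (Nr * x)) (at x)"
    by (rule scale_deriv[OF P_deriv])
  then show ?thesis unfolding cu_def[abs_def] cu1_def by simp
qed
lemma du1: "(cu1 has_real_derivative cu2 x) (at x)"
proof -
  have "((\<lambda>x. (cA * Nr) * P1 cc (Nr * x)) has_real_derivative (cA * Nr) * Nr * P2 cc (Nr * x)) (at x)"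
    by (rule scale_deriv[OF P1_deriv])
  then show ?thesis unfolding cu1_def[abs_def] cu2_def by (simp add: power2_eq_square ac_simps)
qed
lemma cu_cont: "continuous_on UNIV cu"
  using du by (meson DERIV_isCont continuous_at_imp_continuous_on)
lemma cu1_cont: "continuous_on UNIV cu1"
  using du1 by (meson DERIV_isCont continuous_at_imp_continuous_on)
lemma cu2_cont: "continuous_on UNIV cu2"
  unfolding cu2_def[abs_def] by (rule cont_scale[OF P2_cont])
lemma cw1_cont: "continuous_on UNIV cw1"
  unfolding cw1_def[abs_def] by (intro continuous_intros cu1_cont) auto
lemma dw: "(cw has_real_derivative cw1 x) (at x)"
  unfolding cw_def by (rule antider_deriv[OF cw1_cont])
lemma cw_cont: "continuous_on UNIV cw"
  using dw by (meson DERIV_isCont continuous_at_imp_continuous_on)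

lemma u_per: "cu (x + 1) = cu x" "cu1 (x + 1) = cu1 x"
proof -
  have e: "Nr * (x + 1) = Nr * x + real N" by (simp add: Nr_def algebra_simps)
  show "cu (x + 1) = cu x" "cu1 (x + 1) = cu1 x" unfolding cu_def cu1_def e P_pern by simp_all
qed

lemma u1_shift: "cu1 (x + 1 / Nr) = cu1 x"
proof -
  have e: "Nr * (x + 1 / Nr) = Nr * x + 1" using Nr0 by (simp add: algebra_simps)
  show ?thesis unfolding cu1_def e P_per by simp
qed

lemma w1_shift: "cw1 (x + 1 / Nr) = cw1 x" unfolding cw1_def u1_shift by simp

lemma w1_even: "cw1 (- x) = cw1 x"
  unfolding cw1_def cu1_def using P1_odd[of cc "Nr * x"] by (simp add: power2_eq_square)

lemma w_per1: "cw 1 = cw 0"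
proof -
  define Q where "Q = antider (\<lambda>s. P1 cc s ^ 2)"
  have dQ: "\<And>s. (Q has_real_derivative P1 cc s ^ 2) (at s)"
    unfolding Q_def by (rule antider_deriv[OF P1sq_cont])
  have QN: "Q (real N) - Q 0 = real N * (Q 1 - Q 0)"
    by (rule per_antider[OF dQ]) (simp add: P_per)
  have QI: "II = Q 1 - Q 0" unfolding II_def using FTC_all(2)[OF dQ P1sq_cont, of 0 1] by simp
  define W where "W x = eta * x - (cA^2 * Nr / 2) * Q (Nr * x)" for x
  have dW: "(W has_real_derivative cw1 x) (at x)" for x
  proof -
    have a: "((\<lambda>x. (cA^2 * Nr / 2) * Q (Nr * x)) has_real_derivative (cA^2 * Nr / 2) * Nr * P1 cc (Nr * x) ^ 2) (at x)"
      by (rule scale_deriv[OF dQ])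
    have b: "((\<lambda>x. eta * x) has_real_derivative eta) (at x)" by (auto intro!: derivative_eq_intros)
    have "(W has_real_derivative eta - (cA^2 * Nr / 2) * Nr * P1 cc (Nr * x) ^ 2) (at x)"
      unfolding W_def[abs_def] by (rule DERIV_diff[OF b a])
    then show ?thesis unfolding cw1_def cu1_def by (simp add: power_mult_distrib power2_eq_square mult_ac)
  qed
  have "cw 1 - cw 0 = W 1 - W 0"
    using FTC_all(2)[OF dw cw1_cont, of 0 1] FTC_all(2)[OF dW cw1_cont, of 0 1] by simp
  also have "W 1 - W 0 = eta - (cA^2 * Nr / 2) * (Q (real N) - Q 0)"
    by (simp add: W_def Nr_def right_diff_distrib)
  also have "\<dots> = eta - (cA^2 * Nr / 2) * (Nr * II)" using QN QI by (simp add: Nr_def)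
  also have "\<dots> = 0" unfolding A2 using II_pos Nr0 by (simp add: field_simps power2_eq_square)
  finally show ?thesis by simp
qed

lemma w_shift: "cw (x + 1 / Nr) = cw x"
proof -
  define G where "G t = cw ((1 / Nr) * t)" for t
  have dG: "\<And>t. (G has_real_derivative (1 / Nr) * cw1 ((1 / Nr) * t)) (at t)"
    using scale_deriv[OF dw, of 1 "1 / Nr"] unfolding G_def[abs_def] by simp
  have pF: "(1 / Nr) * cw1 ((1 / Nr) * (s + 1)) = (1 / Nr) * cw1 ((1 / Nr) * s)" for s
  proof -
    have e: "(1 / Nr) * (s + 1) = (1 / Nr) * s + 1 / Nr" using Nr0 by (simp add: field_simps)
    show ?thesis by (simp only: e w1_shift)
  qed
  have GN: "G (real N) - G 0 = real N * (G 1 - G 0)" by (rule per_antider[OF dG pF])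
  have "G (real N) = cw 1" using Nr0 by (simp add: G_def Nr_def)
  moreover have "G 0 = cw 0" by (simp add: G_def)
  ultimately have "G 1 = G 0" using GN w_per1 N1 by simp
  moreover have "G (Nr * x + 1) - G (Nr * x) = G 1 - G 0" by (rule per_shift[OF dG pF])
  moreover have "G (Nr * x + 1) = cw (x + 1 / Nr)" using Nr0 by (simp add: G_def algebra_simps)
  moreover have "G (Nr * x) = cw x" using Nr0 by (simp add: G_def)
  ultimately show ?thesis by simp
qed

lemma w_shiftn: "cw (x + real k / Nr) = cw x"
proof (induction k)
  case 0 then show ?case by simp
next
  case (Suc k)
  have "x + real (Suc k) / Nr = (x + real k / Nr) + 1 / Nr" by (simp add: add_divide_distrib)
  then show ?case using w_shift[of "x + real k / Nr"] Suc by (simp add: add.assoc)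
qed

lemma w_per: "cw (x + 1) = cw x"
  using w_shiftn[of x N] Nr0 by (simp add: Nr_def)

lemma w_odd: "cw (- x) = - cw x"
proof -
  have "\<forall>y. ((\<lambda>x. cw x + cw (- x)) has_real_derivative 0) (at y)"
  proof
    fix y
    have a: "((\<lambda>x. cw (- x)) has_real_derivative - cw1 (- y)) (at y)"
      using scale_deriv[OF dw, of 1 "-1" y] by simp
    have "((\<lambda>x. cw x + cw (- x)) has_real_derivative cw1 y + - cw1 (- y)) (at y)"
      by (rule DERIV_add[OF dw a])
    then show "((\<lambda>x. cw x + cw (- x)) has_real_derivative 0) (at y)" using w1_even by simp
  qed
  from DERIV_isconst_all[OF this, of x 0] show ?thesis by (simp add: cw_def antider_zero)
qed

lemma w_mid: "cw ((real k + 1/2) / Nr) = 0"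
proof -
  have "cw (1 / (2 * Nr)) = cw (- (1 / (2 * Nr)) + 1 / Nr)" using Nr0 by (simp add: field_simps)
  also have "\<dots> = cw (- (1 / (2 * Nr)))" by (rule w_shift)
  also have "\<dots> = - cw (1 / (2 * Nr))" by (rule w_odd)
  finally have z: "cw (1 / (2 * Nr)) = 0" by simp
  have "(real k + 1/2) / Nr = 1 / (2 * Nr) + real k / Nr" using Nr0 by (simp add: field_simps)
  then show ?thesis using w_shiftn z by simp
qed

end


context constr begin

lemma Om_char: "x \<in> cOm \<longleftrightarrow> (of_int \<lfloor>Nr * x\<rfloor> + cd/2 \<le> Nr * x \<and> Nr * x \<le> of_int \<lfloor>Nr * x\<rfloor> + 1 - cd/2)"
  unfolding cOm_def cc_def using cos_char[OF d0 d1, of "Nr * x"] by simp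

lemma Om_closed: "closed cOm"
  unfolding cOm_def by (rule closed_Collect_le) (auto intro!: continuous_intros)

lemma Om_per: "periodic_set1 cOm"
proof -
  have "cos(2 * pi * (Nr * (x + 1))) = cos(2 * pi * (Nr * x))" for x
  proof -
    have e: "Nr * (x + 1) = Nr * x + real N" by (simp add: Nr_def algebra_simps)
    show ?thesis unfolding e P_pern(3) ..
  qed
  then show ?thesis unfolding periodic_set1_def cOm_def by simp
qed

lemma Om_u: "x \<in> cOm \<Longrightarrow> cu x = 0 \<and> cu1 x = 0"
  unfolding cOm_def cu_def cu1_def using P_zero[of "Nr * x" cc] by simp

lemma Om_w1: "x \<in> cOm \<Longrightarrow> cw1 x = eta"
  using Om_u by (simp add: cw1_def)

lemma one_notin: "1 \<notin> cOm"
proof -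
  have "cos(2 * pi * (0 + real N)) = cos(2 * pi * 0)" by (rule P_pern(3))
  then have "cos(2 * pi * (Nr * 1)) = 1" by (simp add: Nr_def)
  then show ?thesis unfolding cOm_def using c1 by simp
qed

lemma T_floor:
  assumes "(real k + cd/2)/Nr \<le> x" "x \<le> (real k + 1 - cd/2)/Nr"
  shows "real k + cd/2 \<le> Nr * x" "Nr * x \<le> real k + 1 - cd/2" "\<lfloor>Nr * x\<rfloor> = int k"
proof -
  show a: "real k + cd/2 \<le> Nr * x" using assms(1) Nr0 by (simp add: pos_divide_le_eq mult.commute)
  show b: "Nr * x \<le> real k + 1 - cd/2" using assms(2) Nr0 by (simp add: pos_le_divide_eq mult.commute)
  show "\<lfloor>Nr * x\<rfloor> = int k" using a b d0 by (intro floor_unique) auto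
qed

lemma T_in:
  assumes "(real k + cd/2)/Nr \<le> x" "x \<le> (real k + 1 - cd/2)/Nr"
  shows "x \<in> cOm"
  using T_floor[OF assms] Om_char by simp

lemma Om_meas: "measure lborel (cOm \<inter> {0..<1}) = th"
proof -
  define T where "T k = {(real k + cd/2)/Nr .. (real k + 1 - cd/2)/Nr}" for k :: nat
  have eq: "cOm \<inter> {0..<1} = (\<Union>k\<in>{..<N}. T k)"
  proof (intro equalityI subsetI)
    fix x assume x: "x \<in> cOm \<inter> {0..<1}"
    define k where "k = \<lfloor>Nr * x\<rfloor>"
    have k0: "0 \<le> k" using x Nr0 by (simp add: k_def)
    have "Nr * x < Nr * 1" using x Nr0 by (intro mult_strict_left_mono) auto
    then have kN: "k < int N" unfolding k_def Nr_def by (simp add: floor_less_iff)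
    have c: "of_int k + cd/2 \<le> Nr * x" "Nr * x \<le> of_int k + 1 - cd/2" using Om_char x k_def by auto
    have rk: "real (nat k) = of_int k" using k0 by simp
    have "(real (nat k) + cd/2)/Nr \<le> x" using c Nr0 rk by (simp add: pos_divide_le_eq mult.commute)
    moreover have "x \<le> (real (nat k) + 1 - cd/2)/Nr" using c Nr0 rk by (simp add: pos_le_divide_eq mult.commute)
    moreover have "nat k < N" using kN k0 by linarith
    ultimately show "x \<in> (\<Union>k\<in>{..<N}. T k)" unfolding T_def by auto
  next
    fix x assume "x \<in> (\<Union>k\<in>{..<N}. T k)"
    then obtain k where k: "k < N" "(real k + cd/2)/Nr \<le> x" "x \<le> (real k + 1 - cd/2)/Nr"
      unfolding T_def by auto
    have a: "real k + cd/2 \<le> Nr * x" "Nr * x \<le> real k + 1 - cd/2" using T_floor[OF k(2,3)] by auto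
    have "0 < Nr * x" using a(1) d0 by linarith
    then have x0: "0 \<le> x" using Nr0 by (simp add: zero_less_mult_iff)
    have "real k + 1 \<le> Nr" using k by (simp add: Nr_def)
    then have "Nr * x < Nr * 1" using a(2) d0 by linarith
    then have x1: "x < 1" by (rule mult_less_cancel_left_pos[OF Nr0, THEN iffD1])
    show "x \<in> cOm \<inter> {0..<1}" using T_in[OF k(2,3)] x0 x1 by auto
  qed
  have disj: "disjoint_family_on T {..<N}"
    unfolding disjoint_family_on_def
  proof (intro ballI impI)
    fix m n assume "m \<in> {..<N}" "n \<in> {..<N}" and mn: "m \<noteq> n"
    show "T m \<inter> T n = {}"
    proof (rule ccontr)
      assume "T m \<inter> T n \<noteq> {}"
      then obtain x where "x \<in> T m" "x \<in> T n" by blast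
      then have "\<lfloor>Nr * x\<rfloor> = int m" "\<lfloor>Nr * x\<rfloor> = int n" unfolding T_def using T_floor(3) by auto
      then show False using mn by simp
    qed
  qed
  have mT: "measure lborel (T k) = th / Nr" for k
  proof -
    have "(real k + cd/2)/Nr \<le> (real k + 1 - cd/2)/Nr" using d1 Nr0 by (intro divide_right_mono) auto
    then have "measure lborel (T k) = (real k + 1 - cd/2)/Nr - (real k + cd/2)/Nr" by (simp add: T_def)
    also have "\<dots> = th / Nr" by (simp add: cd_def diff_divide_distrib[symmetric])
    finally show ?thesis .
  qed
  have "measure lborel (\<Union>k\<in>{..<N}. T k) = (\<Sum>k\<in>{..<N}. measure lborel (T k))"
  proof (rule measure_finite_Union)
    show "finite {..<N}" by simp
    show "T ` {..<N} \<subseteq> sets lborel" by (auto simp: T_def)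
    show "disjoint_family_on T {..<N}" by (rule disj)
    show "\<And>i. i \<in> {..<N} \<Longrightarrow> emeasure lborel (T i) \<noteq> \<infinity>" by (simp add: T_def emeasure_lborel_Icc_eq)
  qed
  also have "\<dots> = th" using mT Nr0 by (simp add: Nr_def)
  finally show ?thesis using eq by simp
qed

lemma wbound:
  assumes x: "x \<in> cOm" "0 \<le> x" "x < 1"
  shows "\<bar>cw x\<bar> \<le> eta * th / (2 * Nr)"
proof -
  define k where "k = nat \<lfloor>Nr * x\<rfloor>"
  have k0: "0 \<le> \<lfloor>Nr * x\<rfloor>" using x Nr0 by simp
  have rk: "real k = of_int \<lfloor>Nr * x\<rfloor>" using k0 by (simp add: k_def)
  have c: "real k + cd/2 \<le> Nr * x" "Nr * x \<le> real k + 1 - cd/2" using Om_char x rk by auto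
  define lo where "lo = (real k + cd/2)/Nr"
  define hi where "hi = (real k + 1 - cd/2)/Nr"
  define m where "m = (real k + 1/2)/Nr"
  have lohi: "lo < hi" unfolding lo_def hi_def using d1 Nr0 by (intro divide_strict_right_mono) auto
  have xl: "lo \<le> x" unfolding lo_def using c Nr0 by (simp add: pos_divide_le_eq mult.commute)
  have xh: "x \<le> hi" unfolding hi_def using c Nr0 by (simp add: pos_le_divide_eq mult.commute)
  have ml: "m - lo = th / (2 * Nr)" unfolding m_def lo_def cd_def using Nr0 by (simp add: field_simps)
  have mh: "hi - m = th / (2 * Nr)" unfolding m_def hi_def cd_def using Nr0 by (simp add: field_simps)
  have th2: "0 \<le> th / (2 * Nr)" using th0 Nr0 by simp
  define g where "g y = cw y - eta * y" for y
  have dg: "(g has_real_derivative 0) (at y)" if "lo < y" "y < hi" for y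
  proof -
    have "y \<in> cOm" using that by (intro T_in[of k]) (auto simp: lo_def hi_def)
    then have e: "cw1 y = eta" by (rule Om_w1)
    have b: "((\<lambda>x. eta * x) has_real_derivative eta) (at y)" by (auto intro!: derivative_eq_intros)
    have "(g has_real_derivative cw1 y - eta) (at y)" unfolding g_def[abs_def] by (rule DERIV_diff[OF dw b])
    then show ?thesis using e by simp
  qed
  have cg: "continuous_on {lo..hi} g"
    unfolding g_def[abs_def] by (intro continuous_intros continuous_on_subset[OF cw_cont]) auto
  have g1: "g x = g lo" by (rule DERIV_isconst2[OF lohi cg dg]) (use xl xh in auto)
  have g2: "g m = g lo" by (rule DERIV_isconst2[OF lohi cg dg]) (use ml mh th2 in auto)
  have "cw x = eta * (x - m)" using g1 g2 w_mid[of k] by (simp add: g_def m_def algebra_simps)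
  then have e: "\<bar>cw x\<bar> = eta * \<bar>x - m\<bar>" using eta0 by (simp add: abs_mult)
  have "\<bar>x - m\<bar> \<le> th / (2 * Nr)" using xl xh ml mh by auto
  then have "eta * \<bar>x - m\<bar> \<le> eta * (th / (2 * Nr))" using eta0 by (intro mult_left_mono) auto
  then show ?thesis using e by simp
qed

end


lemma H1I:
  fixes F f :: "real \<Rightarrow> real"
  assumes d: "\<And>x. (F has_real_derivative f x) (at x)" and c: "continuous_on UNIV f"
    and p: "\<And>x. F (x+1) = F x"
  shows "H1_per_deriv F f"
proof -
  have m: "f \<in> borel_measurable lborel" using borel_measurable_continuous_onI[OF c] by simp
  have c2: "continuous_on {0..1} (\<lambda>x. (f x)^2)"
    by (intro continuous_intros continuous_on_subset[OF c]) auto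
  have s2: "set_integrable lborel {0..1} (\<lambda>x. (f x)^2)" by (rule borel_integrable_atLeastAtMost'[OF c2])
  show ?thesis unfolding H1_per_deriv_def periodic1_def
    using FTC_all(3,4)[OF d c] p m s2 by auto
qed

lemma set_int_nonneg:
  fixes f :: "'a \<Rightarrow> real"
  shows "(\<And>x. 0 \<le> f x) \<Longrightarrow> 0 \<le> (LINT x:S|M. f x)"
  unfolding set_lebesgue_integral_def
  by (intro Bochner_Integration.integral_nonneg) (auto simp: indicator_def)

lemma energy_nonneg:
  assumes "0 < am" "0 < h" "0 < as"
  shows "0 \<le> energy1D am h as eta w w1 u1 u2 Om"
  unfolding energy1D_def using assms
  by (intro add_nonneg_nonneg mult_nonneg_nonneg set_int_nonneg real_sqrt_ge_zero) (auto intro!: set_int_nonneg)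

context constr begin

lemma adm: "admissible1D th cw cw1 cu cu1 cu2 cOm"
  unfolding admissible1D_def
proof (intro conjI)
  show "H1_per_deriv cw cw1" by (rule H1I[OF dw cw1_cont w_per])
  show "H1_per_deriv cu cu1" by (rule H1I[OF du cu1_cont u_per(1)])
  show "H1_per_deriv cu1 cu2" by (rule H1I[OF du1 cu2_cont u_per(2)])
  show "\<forall>x. 0 \<le> cu x" using A0 P_nonneg by (simp add: cu_def)
  show "closed cOm" by (rule Om_closed)
  show "periodic_set1 cOm" by (rule Om_per)
  show "measure lborel (cOm \<inter> {0..<1}) = th" by (rule Om_meas)
  show "\<forall>x\<in>cOm. cu x = 0" using Om_u by simp
qed

lemma bend_key: "cA^2 * Nr^4 * JJ \<le> 3600 * pi^4 * eta * Nr^2 / cd^2"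
proof -
  define r where "r = 1 - cc"
  have r1: "cd^2 \<le> r" using dc by (simp add: r_def)
  have r0: "0 < r" using c1 by (simp add: r_def)
  have cd0: "0 < cd" by (rule d0)
  have a: "JJ * cd^2 \<le> cd * (60 * pi^2 * r^2)^2 * cd^2"
    using JJ_up by (intro mult_right_mono) (auto simp: r_def)
  have b: "cd * (60 * pi^2 * r^2)^2 * cd^2 = 3600 * pi^4 * (r^4 * cd^3)"
    by (simp add: eval_nat_numeral algebra_simps)
  have c4: "cd^4 \<le> r^2"
  proof -
    have "(cd^2)^2 \<le> r^2" using r1 by (intro power_mono) auto
    then show ?thesis by (simp add: eval_nat_numeral algebra_simps)
  qed
  have c5: "r^4 * cd^4 \<le> r^4 * r^2" using c4 by (intro mult_left_mono) auto
  have c6: "r^4 * cd^3 = (r^4 * cd^4) / cd" using cd0 by (simp add: eval_nat_numeral field_simps)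
  have c7: "(r^4 * cd^4) / cd \<le> (r^4 * r^2) / cd" using c5 cd0 by (intro divide_right_mono) auto
  have c8: "3600 * pi^4 * ((r^4 * r^2) / cd) = 1800 * pi^4 * (2 * (r^3)^2 / cd)"
    by (simp add: eval_nat_numeral algebra_simps)
  have c9: "1800 * pi^4 * (2 * (r^3)^2 / cd) \<le> 1800 * pi^4 * II"
    using II_low by (intro mult_left_mono) (auto simp: r_def)
  have key: "JJ * cd^2 \<le> 1800 * pi^4 * II"
  proof -
    have "JJ * cd^2 \<le> 3600 * pi^4 * (r^4 * cd^3)" using a b by simp
    also have "\<dots> \<le> 3600 * pi^4 * ((r^4 * r^2) / cd)" using c6 c7 by (intro mult_left_mono) auto
    also have "\<dots> \<le> 1800 * pi^4 * II" using c8 c9 by simp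
    finally show ?thesis .
  qed
  have pos: "0 < II" "0 < cd" "0 < Nr" using II_pos d0 Nr0 by auto
  have "cA^2 * Nr^4 * JJ = (2 * eta * Nr^2 / (II * cd^2)) * (JJ * cd^2)"
    unfolding A2 using pos by (simp add: eval_nat_numeral field_simps)
  also have "\<dots> \<le> (2 * eta * Nr^2 / (II * cd^2)) * (1800 * pi^4 * II)"
    using key pos eta0 by (intro mult_left_mono) auto
  also have "\<dots> = 3600 * pi^4 * eta * Nr^2 / cd^2"
    using pos by (simp add: field_simps)
  finally show ?thesis .
qed

lemma energy_le:
  assumes h0: "0 < h" and a0: "0 < as"
  shows "energy1D am h as eta cw cw1 cu1 cu2 cOm
     \<le> as * eta^2 * th^2 / (2 * Nr) + h^3 * (3600 * pi^4 * eta * Nr^2 / cd^2)"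
proof -
  define S where "S = cOm \<inter> {0..1}"
  have S_eq: "S = cOm \<inter> {0..<1}" using one_notin by (auto simp: S_def less_le)
  have "closed S" unfolding S_def by (intro closed_Int Om_closed closed_atLeastAtMost)
  then have Ssets: "S \<in> sets lborel" using borel_closed by simp
  have mS: "measure lborel S = th" using S_eq Om_meas by simp
  have Ssub: "S \<subseteq> {0..1}" by (auto simp: S_def)
  have le: "emeasure lborel S \<le> emeasure lborel {0..1::real}" by (rule emeasure_mono[OF Ssub]) simp
  have e: "emeasure lborel {0..1::real} \<noteq> top" by simp
  have fin: "emeasure lborel S \<noteq> \<infinity>" using neq_top_trans[OF e le] by simp
  have E1: "(LINT x:{0..1}|lborel. (cw1 x + (cu1 x)\<^sup>2 / 2 - eta)\<^sup>2) = 0"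
    by (simp add: cw1_def)
  have E2: "(LINT x:{0..1}|lborel. (cu2 x)\<^sup>2) = cA^2 * Nr^4 * JJ"
  proof -
    define Q where "Q = antider (\<lambda>s. P2 cc s ^ 2)"
    have dQ: "\<And>s. (Q has_real_derivative P2 cc s ^ 2) (at s)"
      unfolding Q_def by (rule antider_deriv[OF P2sq_cont])
    have QN: "Q (real N) - Q 0 = real N * (Q 1 - Q 0)"
      by (rule per_antider[OF dQ]) (simp add: P_per)
    have QJ: "JJ = Q 1 - Q 0" unfolding JJ_def using FTC_all(2)[OF dQ P2sq_cont, of 0 1] by simp
    define V where "V x = (cA^2 * Nr^3) * Q (Nr * x)" for x
    have dV: "(V has_real_derivative (cu2 x)^2) (at x)" for x
    proof -
      have "((\<lambda>x. (cA^2 * Nr^3) * Q (Nr * x)) has_real_derivative (cA^2 * Nr^3) * Nr * P2 cc (Nr * x) ^ 2) (at x)"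
        by (rule scale_deriv[OF dQ])
      then show ?thesis unfolding V_def[abs_def] cu2_def by (simp add: eval_nat_numeral algebra_simps)
    qed
    have c2: "continuous_on UNIV (\<lambda>x. (cu2 x)^2)" by (intro continuous_intros cu2_cont)
    have "(LINT x:{0..1}|lborel. (cu2 x)\<^sup>2) = V 1 - V 0" by (rule FTC_all(4)[OF dV c2]) simp
    also have "\<dots> = (cA^2 * Nr^3) * (Q (real N) - Q 0)" by (simp add: V_def Nr_def right_diff_distrib)
    also have "Q (real N) - Q 0 = Nr * JJ" using QN QJ by (simp add: Nr_def)
    also have "(cA^2 * Nr^3) * (Nr * JJ) = cA^2 * Nr^4 * JJ" by (simp add: eval_nat_numeral mult_ac)
    finally show ?thesis .
  qed
  have E3a: "(LINT x:S|lborel. (cw1 x)\<^sup>2) = eta^2 * th"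
  proof -
    have "(LINT x:S|lborel. (cw1 x)\<^sup>2) = (LINT x:S|lborel. eta^2)"
      by (rule set_lebesgue_integral_cong[OF Ssets]) (auto simp: S_def Om_w1)
    also have "\<dots> = measure lborel S *\<^sub>R eta^2" by (rule set_integral_const[OF Ssets fin])
    finally show ?thesis using mS by simp
  qed
  define B where "B = eta * th / (2 * Nr)"
  have B0: "0 \<le> B" using eta0 th0 Nr0 by (simp add: B_def)
  have E3b: "(LINT x:S|lborel. (cw x)\<^sup>2) \<le> B^2 * th"
  proof -
    have cw2: "continuous_on {0..1} (\<lambda>x. (cw x)^2)"
      by (intro continuous_intros continuous_on_subset[OF cw_cont]) auto
    have si1: "set_integrable lborel S (\<lambda>x. (cw x)^2)"
      by (rule set_integrable_subset[OF borel_integrable_atLeastAtMost'[OF cw2] Ssets Ssub])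
    have si2: "set_integrable lborel S (\<lambda>x. B^2)"
      by (rule set_integrable_subset[OF borel_integrable_atLeastAtMost' Ssets Ssub]) simp
    have "(LINT x:S|lborel. (cw x)\<^sup>2) \<le> (LINT x:S|lborel. B^2)"
    proof (rule set_integral_mono[OF si1 si2])
      fix x assume "x \<in> S"
      then have "x \<in> cOm" "0 \<le> x" "x < 1" using S_eq by auto
      then have "\<bar>cw x\<bar> \<le> B" unfolding B_def by (rule wbound)
      then have "\<bar>cw x\<bar>^2 \<le> B^2" by (intro power_mono) auto
      then show "(cw x)^2 \<le> B^2" by simp
    qed
    also have "\<dots> = measure lborel S *\<^sub>R B^2" by (rule set_integral_const[OF Ssets fin])
    finally show ?thesis using mS by (simp add: mult.commute)
  qed
  have sq: "sqrt (LINT x:S|lborel. (cw1 x)\<^sup>2) * sqrt (LINT x:S|lborel. (cw x)\<^sup>2) \<le> eta^2 * th^2 / (2 * Nr)"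
  proof -
    have "sqrt (LINT x:S|lborel. (cw1 x)\<^sup>2) * sqrt (LINT x:S|lborel. (cw x)\<^sup>2)
        = sqrt (eta^2 * th * (LINT x:S|lborel. (cw x)\<^sup>2))" unfolding E3a by (simp add: real_sqrt_mult)
    also have "\<dots> \<le> sqrt (eta^2 * th * (B^2 * th))"
      using E3b th0 by (intro real_sqrt_le_mono mult_left_mono) auto
    also have "eta^2 * th * (B^2 * th) = (eta * B * th)^2" by (simp add: power2_eq_square)
    also have "sqrt ((eta * B * th)^2) = eta * B * th" using eta0 B0 th0 by simp
    also have "eta * B * th = eta^2 * th^2 / (2 * Nr)" by (simp add: B_def power2_eq_square)
    finally show ?thesis .
  qed
  have "energy1D am h as eta cw cw1 cu1 cu2 cOm
      = h^3 * (cA^2 * Nr^4 * JJ) + as * (sqrt (LINT x:S|lborel. (cw1 x)\<^sup>2) * sqrt (LINT x:S|lborel. (cw x)\<^sup>2))"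
    unfolding energy1D_def E1 E2 S_def by simp
  also have "\<dots> \<le> h^3 * (3600 * pi^4 * eta * Nr^2 / cd^2) + as * (eta^2 * th^2 / (2 * Nr))"
    using bend_key sq h0 a0 by (intro add_mono mult_left_mono) auto
  finally show ?thesis by simp
qed

end


lemma cube_pow:
  fixes x :: real
  assumes "0 < x"
  shows "(x powr (1/3))^k = x powr (real k / 3)"
  using powr_power[of x "1/3" k] assms by simp

theorem theorem1:
  shows "\<exists>c0>0. \<exists>K3>0. \<forall>\<alpha>m h \<alpha>s \<eta> \<theta> :: real.
    \<alpha>m > 0 \<and> 0 < \<theta> \<and> \<theta> < 1 \<and> h > 0 \<and> \<alpha>s > 0 \<and> \<eta> > 0 \<and>
    h / (\<eta> powr (1/3) * \<alpha>s powr (1/3)) < c0 * (1 - \<theta>) powr (2/3) * \<theta> powr (2/3) \<longrightarrow>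
    E1D \<alpha>m h \<alpha>s \<eta> \<theta> \<le>
      K3 * \<theta> powr (4/3) / (1 - \<theta>) powr (2/3) * \<alpha>s powr (2/3) * \<eta> powr (5/3) * h"
proof -
  define K :: real where "K = 1/2 + 14400 * pi^4"
  have K0: "0 < K" by (simp add: K_def add_pos_nonneg)
  have main: "E1D am h as eta th \<le> K * th powr (4/3) / (1 - th) powr (2/3) * as powr (2/3) * eta powr (5/3) * h"
    if H: "am > 0 \<and> 0 < th \<and> th < 1 \<and> h > 0 \<and> as > 0 \<and> eta > 0 \<and>
      h / (eta powr (1/3) * as powr (1/3)) < 1 * (1 - th) powr (2/3) * th powr (2/3)"
    for am h as eta th :: real
  proof -
    have am0: "0 < am" and th0: "0 < th" and th1: "th < 1" and h0: "0 < h" and as0: "0 < as"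
      and eta0: "0 < eta" using H by auto
    have hyp: "h / (eta powr (1/3) * as powr (1/3)) < (1 - th) powr (2/3) * th powr (2/3)" using H by simp
    have dpos: "0 < 1 - th" using th1 by simp
    define a where "a = as powr (1/3)"
    define e where "e = eta powr (1/3)"
    define dd where "dd = (1 - th) powr (1/3)"
    define t where "t = th powr (1/3)"
    have pos: "0 < a" "0 < e" "0 < dd" "0 < t" using as0 eta0 dpos th0 by (auto simp: a_def e_def dd_def t_def)
    have cub: "as = a^3" "eta = e^3" "1 - th = dd^3" "th = t^3"
      using cube_pow[OF as0, of 3] cube_pow[OF eta0, of 3] cube_pow[OF dpos, of 3] cube_pow[OF th0, of 3]
        as0 eta0 dpos th0
      by (auto simp: a_def e_def dd_def t_def)
    have pw: "(1 - th) powr (2/3) = dd^2" "th powr (2/3) = t^2" "th powr (4/3) = t^4"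
      "as powr (2/3) = a^2" "eta powr (5/3) = e^5"
      using cube_pow[OF dpos, of 2] cube_pow[OF th0, of 2] cube_pow[OF th0, of 4]
        cube_pow[OF as0, of 2] cube_pow[OF eta0, of 5]
      by (auto simp: a_def e_def dd_def t_def)
    have hyp2: "h < dd^2 * t^2 * (e * a)"
      using hyp pos pw by (simp add: a_def[symmetric] e_def[symmetric] divide_less_eq)
    define L where "L = h / (e * a * dd^2 * t^2)"
    have L0: "0 < L" using h0 pos by (simp add: L_def)
    have L1: "L < 1" using hyp2 pos unfolding L_def by (simp add: mult_ac)
    define N where "N = nat \<lceil>1 / L\<rceil>"
    have NL: "1 / L \<le> real N" unfolding N_def by (rule real_nat_ceiling_ge)
    have iL: "1 < 1 / L" using L0 L1 by simp
    have N1: "1 \<le> N" using NL iL by linarith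
    have NU: "real N \<le> 2 / L"
    proof -
      have "0 \<le> \<lceil>1 / L\<rceil>" using iL by simp
      then have "real N = of_int \<lceil>1 / L\<rceil>" by (simp add: N_def)
      also have "\<dots> < 1 / L + 1" using ceiling_correct[of "1/L"] by linarith
      also have "\<dots> < 2 / L" using iL by (simp add: field_simps)
      finally show ?thesis by simp
    qed
    interpret constr th eta N by unfold_locales (use th0 th1 eta0 N1 in auto)
    have E: "E1D am h as eta th \<le> energy1D am h as eta cw cw1 cu1 cu2 cOm"
      unfolding E1D_def
    proof (rule cInf_lower2)
      show "energy1D am h as eta cw cw1 cu1 cu2 cOm \<in> {energy1D am h as eta w w1 u1 u2 \<Omega> |w w1 u u1 u2 \<Omega>.
          admissible1D th w w1 u u1 u2 \<Omega>}" using adm by blast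
      show "bdd_below {energy1D am h as eta w w1 u1 u2 \<Omega> |w w1 u u1 u2 \<Omega>. admissible1D th w w1 u u1 u2 \<Omega>}"
        unfolding bdd_below_def using energy_nonneg[OF am0 h0 as0] by blast
    qed simp
    have E2: "energy1D am h as eta cw cw1 cu1 cu2 cOm
       \<le> as * eta^2 * th^2 / (2 * Nr) + h^3 * (3600 * pi^4 * eta * Nr^2 / cd^2)"
      by (rule energy_le[OF h0 as0])
    have iN: "1 / Nr \<le> L" using NL L0 Nr0 by (simp add: Nr_def field_simps)
    have X1: "as * eta^2 * th^2 / (2 * Nr) \<le> as * eta^2 * th^2 / 2 * L"
    proof -
      have "as * eta^2 * th^2 / (2 * Nr) = as * eta^2 * th^2 / 2 * (1 / Nr)" by simp
      also have "\<dots> \<le> as * eta^2 * th^2 / 2 * L" using iN as0 by (intro mult_left_mono) auto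
      finally show ?thesis .
    qed
    have X2: "h^3 * (3600 * pi^4 * eta * Nr^2 / cd^2) \<le> h^3 * (3600 * pi^4 * eta * (2 / L)^2 / cd^2)"
    proof -
      have "Nr^2 \<le> (2 / L)^2" using NU Nr0 by (intro power_mono) (auto simp: Nr_def)
      then show ?thesis using h0 eta0 d0 by (intro mult_left_mono divide_right_mono) auto
    qed
    have cdd: "cd = dd^3" using cub(3) by (simp add: cd_def)
    define T where "T = t^4 / dd^2 * a^2 * e^5 * h"
    have I1: "as * eta^2 * th^2 / 2 * L = 1/2 * T"
      unfolding T_def L_def cub using pos by (simp add: field_simps eval_nat_numeral)
    have I2: "h^3 * (3600 * pi^4 * eta * (2 / L)^2 / cd^2) = 14400 * pi^4 * T"
      unfolding T_def L_def cdd unfolding cub using pos h0 by (simp add: field_simps eval_nat_numeral)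
    have "E1D am h as eta th \<le> 1/2 * T + 14400 * pi^4 * T" using E E2 X1 X2 I1 I2 by linarith
    also have "\<dots> = K * T" by (simp add: K_def algebra_simps)
    also have "\<dots> = K * th powr (4/3) / (1 - th) powr (2/3) * as powr (2/3) * eta powr (5/3) * h"
      unfolding pw T_def by simp
    finally show ?thesis .
  qed
  show ?thesis
    apply (rule exI[of _ 1])
    apply (rule conjI, simp)
    apply (rule exI[of _ K])
    apply (rule conjI, rule K0)
    using main by blast
qed


end
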